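(* Let $\tilde\varepsilon=(\mathbf F-\hat{\mathbf F})\gamma_0+\varepsilon$. Let $\mathbf X_0$ and $\hat{\mathbf F}_0$ be the submatrices of $\mathbf X$ and $\hat{\mathbf F}$ consisting of the columns indexed by $\mathrm{supp}(\beta_0)$ and $\mathrm{supp}(\gamma_0)$, respectively, and define the events \[ \tilde{\mathcal E}=\Big\{\|n^{-1}(\mathbf X,\hat{\mathbf F})^T\tilde\varepsilon\|_\infty\le c_2\sqrt{(\log p)/n}\Big\},\qquad \tilde{\mathcal E}_0=\Big\{\|n^{-1}(\mathbf X_0,\hat{\mathbf F}_0)^T\tilde\varepsilon\|_\infty\le c_2\sqrt{(\log n)/n}\Big\}, \] where $c_2>2\sqrt2\,\sigma$. Suppose that the columns of $\mathbf X$ all have $L_2$-norm $\sqrt n$ and that $(\mathbf X,\mathbf W)$ is such that $\cos(\omega_{jj})\ge1-\frac{c_2^2\log n}{8K^2T^2n}$ for all $1\le j\le K$. Then, conditionally on $(\mathbf X,\mathbf W)$, \[ P(\tilde{\mathcal E}\cap\tilde{\mathcal E}_0)\ \ge\ 1-\frac{4\sqrt2\,\sigma}{c_2\sqrt{\pi\log p}}\,p^{1-\frac{c_2^2}{8\sigma^2}}-\frac{2\sqrt2\,\sigma s}{c_2\sqrt{\pi\log n}}\,n^{-\frac{c_2^2}{8\sigma^2}}, \] and this lower bound converges to one as $n\to\infty$.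
   Context: Model: $\mathbf y=\mathbf X\beta_0+\mathbf F\gamma_0+\varepsilon$, where $\mathbf X$ is an $n\times p$ random design matrix with columns $\mathbf x_1,\dots,\mathbf x_p$, $\mathbf W$ is an $n\times q$ random covariate matrix whose rows have mean zero and covariance $\Sigma_W$, $\varepsilon\sim N(0,\sigma^2I_n)$ is independent of $(\mathbf X,\mathbf W)$, $\beta_0\in\mathbb R^p$, and $\gamma_0\in\mathbb R^K$ with $\|\gamma_0\|_\infty\le T$ for a constant $T>0$. Assume $p\ge n$ and $p\ge K$. Let $u_1,\dots,u_K$ be the top-$K$ eigenvectors of $\Sigma_W$ and $\hat u_1,\dots,\hat u_K$ the top-$K$ eigenvectors of $n^{-1}\mathbf W^T\mathbf W$; $\mathbf F=(\mathbf f_1,\dots,\mathbf f_K)$ with $\mathbf f_j=\mathbf Wu_j$ rescaled to $\|\mathbf f_j\|_2=\sqrt n$, and $\hat{\mathbf F}=(\hat{\mathbf f}_1,\dots,\hat{\mathbf f}_K)$ with $\hat{\mathbf f}_j=\mathbf W\hat u_j$ rescaled to $\|\hat{\mathbf f}_j\|_2=\sqrt n$. $\omega_{jj}$ is the angle between $\hat{\mathbf f}_j$ and $\mathbf f_j$. $s=\|\beta_0\|_0+\|\gamma_0\|_0$. *)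

theory Defs
  imports "HOL-Probability.Probability"
begin

text \<open>Vectors of length m are functions nat => real (only indices < m matter);
  an m x k matrix A is a function nat => nat => real, entry A i j for i < m, j < k.\<close>

definition dotv :: "nat \<Rightarrow> (nat \<Rightarrow> real) \<Rightarrow> (nat \<Rightarrow> real) \<Rightarrow> real" where
  "dotv m a b = (\<Sum>i<m. a i * b i)"

definition normv :: "nat \<Rightarrow> (nat \<Rightarrow> real) \<Rightarrow> real" where
  "normv m a = sqrt (dotv m a a)"

definition col :: "(nat \<Rightarrow> nat \<Rightarrow> real) \<Rightarrow> nat \<Rightarrow> (nat \<Rightarrow> real)" where
  "col A j = (\<lambda>i. A i j)"

definition mat_vec :: "nat \<Rightarrow> (nat \<Rightarrow> nat \<Rightarrow> real) \<Rightarrow> (nat \<Rightarrow> real) \<Rightarrow> (nat \<Rightarrow> real)" where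
  "mat_vec k A v = (\<lambda>i. \<Sum>l<k. A i l * v l)"

definition vcos :: "nat \<Rightarrow> (nat \<Rightarrow> real) \<Rightarrow> (nat \<Rightarrow> real) \<Rightarrow> real" where
  "vcos m a b = dotv m a b / (normv m a * normv m b)"

text \<open>u 0, ..., u (K-1) are top-K eigenvectors of the symmetric q x q matrix S:
  orthonormal eigenvectors whose eigenvalues are the K largest (with multiplicity),
  listed in non-increasing order.\<close>
definition top_eigvecs :: "nat \<Rightarrow> (nat \<Rightarrow> nat \<Rightarrow> real) \<Rightarrow> nat \<Rightarrow> (nat \<Rightarrow> nat \<Rightarrow> real) \<Rightarrow> bool" where
  "top_eigvecs q S K u \<longleftrightarrow>
     (\<exists>lam :: nat \<Rightarrow> real.
        (\<forall>j<K. \<forall>j'<K. dotv q (u j) (u j') = (if j = j' then 1 else 0)) \<and>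
        (\<forall>j<K. \<forall>i<q. mat_vec q S (u j) i = lam j * u j i) \<and>
        (\<forall>j<K. \<forall>j'<K. j \<le> j' \<longrightarrow> lam j' \<le> lam j) \<and>
        (\<forall>v \<mu>. (\<forall>j<K. dotv q v (u j) = 0) \<and> (\<exists>i<q. v i \<noteq> 0) \<and>
               (\<forall>i<q. mat_vec q S v i = \<mu> * v i) \<longrightarrow> (\<forall>j<K. \<mu> \<le> lam j)))"

definition sample_cov :: "nat \<Rightarrow> (nat \<Rightarrow> nat \<Rightarrow> real) \<Rightarrow> (nat \<Rightarrow> nat \<Rightarrow> real)" where
  "sample_cov n W = (\<lambda>a b. (\<Sum>i<n. W i a * W i b) / real n)"

definition factor_mat :: "nat \<Rightarrow> nat \<Rightarrow> (nat \<Rightarrow> nat \<Rightarrow> real) \<Rightarrow> (nat \<Rightarrow> nat \<Rightarrow> real) \<Rightarrow> (nat \<Rightarrow> nat \<Rightarrow> real)" where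
  "factor_mat n q W u = (\<lambda>i j. sqrt (real n) * mat_vec q W (u j) i / normv n (mat_vec q W (u j)))"

definition supp :: "nat \<Rightarrow> (nat \<Rightarrow> real) \<Rightarrow> nat set" where
  "supp m b = {k. k < m \<and> b k \<noteq> 0}"

definition gauss_noise :: "nat \<Rightarrow> real \<Rightarrow> (nat \<Rightarrow> real) measure" where
  "gauss_noise n \<sigma> = PiM {..<n} (\<lambda>_. density lborel (normal_density 0 \<sigma>))"

definition lemma2_bound :: "real \<Rightarrow> real \<Rightarrow> nat \<Rightarrow> nat \<Rightarrow> nat \<Rightarrow> real" where
  "lemma2_bound \<sigma> c2 n p s =
     1 - 4 * sqrt 2 * \<sigma> / (c2 * sqrt (pi * ln (real p))) * real p powr (1 - c2\<^sup>2 / (8 * \<sigma>\<^sup>2))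
       - 2 * sqrt 2 * \<sigma> * real s / (c2 * sqrt (pi * ln (real n))) * real n powr (- c2\<^sup>2 / (8 * \<sigma>\<^sup>2))"

end

theory Submission
  imports Defs "HOL-Real_Asymp.Real_Asymp"
begin


lemma gauss_prob: "\<sigma> > 0 \<Longrightarrow> prob_space (gauss_noise n \<sigma>)"
  unfolding gauss_noise_def
  by (intro prob_space_PiM prob_space_normal_density) auto

lemma gauss_coord:
  assumes i: "i < n" and sig: "\<sigma> > 0"
  shows "distr (gauss_noise n \<sigma>) borel (\<lambda>x. x i) = density lborel (normal_density 0 \<sigma>)"
proof -
  interpret product_prob_space "\<lambda>_. density lborel (normal_density 0 \<sigma>)" "{..<n}"
    by (intro product_prob_spaceI prob_space_normal_density) (use sig in auto)
  have "distr (gauss_noise n \<sigma>) borel (\<lambda>x. x i) = distr (gauss_noise n \<sigma>) (density lborel (normal_density 0 \<sigma>)) (\<lambda>x. x i)"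
    by (rule distr_cong) auto
  also have "\<dots> = density lborel (normal_density 0 \<sigma>)"
    unfolding gauss_noise_def using i by (intro PiM_component) auto
  finally show ?thesis .
qed

lemma gauss_distributed:
  assumes i: "i < n" and sig: "\<sigma> > 0"
  shows "distributed (gauss_noise n \<sigma>) lborel (\<lambda>x. x i) (normal_density 0 \<sigma>)"
  unfolding distributed_def
proof (intro conjI)
  show "distr (gauss_noise n \<sigma>) lborel (\<lambda>x. x i) = density lborel (normal_density 0 \<sigma>)"
    using gauss_coord[OF i sig] by (metis distr_cong sets_lborel)
  show "(\<lambda>x. x i) \<in> measurable (gauss_noise n \<sigma>) lborel"
    unfolding gauss_noise_def using i by (simp add: measurable_component_singleton)
qed auto

lemma gauss_indep:
  assumes n: "n > 0" and sig: "\<sigma> > 0"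
  shows "prob_space.indep_vars (gauss_noise n \<sigma>) (\<lambda>_. borel) (\<lambda>i x. x i) {..<n}"
proof -
  interpret prob_space "gauss_noise n \<sigma>" by (rule gauss_prob[OF sig])
  have sets: "sets (gauss_noise n \<sigma>) = sets (PiM {..<n} (\<lambda>_. borel :: real measure))"
    unfolding gauss_noise_def by (intro sets_PiM_cong) auto
  show ?thesis
  proof (subst indep_vars_iff_distr_eq_PiM')
    show "{..<n} \<noteq> {}" using n by auto
    show "\<And>i. i \<in> {..<n} \<Longrightarrow> random_variable borel (\<lambda>x. x i)"
      unfolding gauss_noise_def by (simp add: measurable_component_singleton)
    have "distr (gauss_noise n \<sigma>) (PiM {..<n} (\<lambda>_. borel)) (\<lambda>x. \<lambda>i\<in>{..<n}. x i)
        = distr (gauss_noise n \<sigma>) (PiM {..<n} (\<lambda>_. borel)) (\<lambda>x. x)"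
      by (rule distr_cong) (auto simp: gauss_noise_def space_PiM PiE_def extensional_def restrict_def)
    also have "\<dots> = gauss_noise n \<sigma>" by (rule distr_id2[OF sets[symmetric]])
    also have "\<dots> = PiM {..<n} (\<lambda>i. distr (gauss_noise n \<sigma>) borel (\<lambda>x. x i))"
      unfolding gauss_noise_def[of n \<sigma>] by (intro PiM_cong) (auto simp: gauss_coord[OF _ sig, unfolded gauss_noise_def])
    finally show "distr (gauss_noise n \<sigma>) (PiM {..<n} (\<lambda>_. borel)) (\<lambda>x. \<lambda>i\<in>{..<n}. x i) =
        PiM {..<n} (\<lambda>i. distr (gauss_noise n \<sigma>) borel (\<lambda>x. x i))" .
  qed
qed



lemma nd_tendsto: assumes s: "s > 0" shows "((\<lambda>y. - (s\<^sup>2 * normal_density 0 s y / t)) \<longlongrightarrow> 0) at_top"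
proof -
  have "((\<lambda>y. exp (- (y - 0)\<^sup>2 / (2 * s\<^sup>2))) \<longlongrightarrow> 0) at_top"
    using s by real_asymp
  then have "((\<lambda>y. (- (s\<^sup>2 * (1 / sqrt (2 * pi * s\<^sup>2)) / t)) * exp (- (y - 0)\<^sup>2 / (2 * s\<^sup>2))) \<longlongrightarrow> (- (s\<^sup>2 * (1 / sqrt (2 * pi * s\<^sup>2)) / t)) * 0) at_top"
    by (intro tendsto_mult tendsto_const)
  then show ?thesis unfolding normal_density_def by simp
qed

lemma nd_deriv: assumes s: "s > 0" and t: "t > 0"
  shows "((\<lambda>y. - (s\<^sup>2 * normal_density 0 s y / t)) has_real_derivative (normal_density 0 s x * x / t)) (at x)"
  using s t unfolding normal_density_def
  by (auto intro!: derivative_eq_intros)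

lemma half_tail: assumes s: "s > 0" and t: "t > 0"
  shows "(\<integral>\<^sup>+y. ennreal (normal_density 0 s y * y / t) * indicator {t..} y \<partial>lborel)
        = ennreal (s\<^sup>2 * normal_density 0 s t / t)"
proof -
  have "(\<integral>\<^sup>+y. ennreal (normal_density 0 s y * y / t) * indicator {t..} y \<partial>lborel)
     = 0 - (- (s\<^sup>2 * normal_density 0 s t / t))"
    by (rule nn_integral_FTC_atLeast[OF _ nd_deriv[OF s t] _ nd_tendsto[OF s]])
       (use t in \<open>auto intro!: divide_nonneg_pos mult_nonneg_nonneg\<close>)
  then show ?thesis by simp
qed

lemma tail_int: assumes s: "s > 0" and t: "t > 0"
  shows "(\<integral>\<^sup>+y. ennreal (normal_density 0 s y) * indicator {y. t < \<bar>y\<bar>} y \<partial>lborel)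
        \<le> ennreal (2 * (s\<^sup>2 * normal_density 0 s t / t))"
proof -
  define h where "h = (\<lambda>y. ennreal (normal_density 0 s y * y / t) * indicator {t..} y)"
  have hm[measurable]: "h \<in> borel_measurable borel" unfolding h_def by measurable
  have "(\<integral>\<^sup>+y. ennreal (normal_density 0 s y) * indicator {y. t < \<bar>y\<bar>} y \<partial>lborel)
      \<le> (\<integral>\<^sup>+y. h y + h (0 + -1 * y) \<partial>lborel)"
  proof (rule nn_integral_mono)
    fix y :: real
    have sym: "normal_density 0 s (-y) = normal_density 0 s y" by (simp add: normal_density_def)
    show "ennreal (normal_density 0 s y) * indicator {y. t < \<bar>y\<bar>} y \<le> h y + h (0 + -1 * y)"
    proof (cases "t < \<bar>y\<bar>")
      case True
      show ?thesis
      proof (cases "y > 0")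
        case True
        with \<open>t < \<bar>y\<bar>\<close> have "normal_density 0 s y \<le> normal_density 0 s y * y / t"
          using t by (simp add: le_divide_eq mult_left_mono)
        then have "ennreal (normal_density 0 s y) \<le> h y" unfolding h_def using True \<open>t < \<bar>y\<bar>\<close>
          by (auto simp: indicator_def intro: ennreal_leI)
        then show ?thesis using \<open>t < \<bar>y\<bar>\<close> by (auto simp: indicator_def intro: order_trans add_increasing2)
      next
        case False
        with \<open>t < \<bar>y\<bar>\<close> have "normal_density 0 s y * t \<le> normal_density 0 s y * (-y)"
          by (intro mult_left_mono) auto
        then have "normal_density 0 s y \<le> normal_density 0 s (-y) * (-y) / t"
          using t by (subst sym, subst pos_le_divide_eq) auto
        then have "ennreal (normal_density 0 s y) \<le> h (0 + -1 * y)" unfolding h_def using False \<open>t < \<bar>y\<bar>\<close>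
          by (auto simp: indicator_def intro: ennreal_leI)
        then show ?thesis using \<open>t < \<bar>y\<bar>\<close> by (auto simp: indicator_def intro: order_trans add_increasing)
      qed
    qed simp
  qed
  also have "\<dots> = (\<integral>\<^sup>+y. h y \<partial>lborel) + (\<integral>\<^sup>+y. h (0 + -1 * y) \<partial>lborel)"
    by (rule nn_integral_add) auto
  also have "(\<integral>\<^sup>+y. h (0 + -1 * y) \<partial>lborel) = (\<integral>\<^sup>+y. h y \<partial>lborel)"
    using nn_integral_real_affine[OF hm, of "-1" 0] by simp
  also have "(\<integral>\<^sup>+y. h y \<partial>lborel) = ennreal (s\<^sup>2 * normal_density 0 s t / t)"
    unfolding h_def by (rule half_tail[OF s t])
  also have "ennreal (s\<^sup>2 * normal_density 0 s t / t) + ennreal (s\<^sup>2 * normal_density 0 s t / t)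
      = ennreal (2 * (s\<^sup>2 * normal_density 0 s t / t))"
    using s t by (subst ennreal_plus[symmetric]) (auto intro!: divide_nonneg_pos)
  finally show ?thesis .
qed



lemma gauss_lin:
  assumes sig: "\<sigma> > 0" and I: "I = {i. i < n \<and> a i \<noteq> 0}" "I \<noteq> {}"
  shows "distributed (gauss_noise n \<sigma>) lborel (\<lambda>x. \<Sum>i\<in>I. a i * x i)
           (normal_density 0 (sqrt (\<Sum>i\<in>I. (\<bar>a i\<bar> * \<sigma>)\<^sup>2)))"
proof -
  interpret prob_space "gauss_noise n \<sigma>" by (rule gauss_prob[OF sig])
  have fin: "finite I" using I by auto
  have n: "n > 0" using I by auto
  have ind: "indep_vars (\<lambda>_. borel) (\<lambda>i x. x i) I"
    by (rule indep_vars_subset[OF gauss_indep[OF n sig]]) (use I in auto)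
  have ind2: "indep_vars (\<lambda>_. borel) (\<lambda>i x. a i * x i) I"
    using indep_vars_compose2[OF ind, of "\<lambda>i y. a i * y" "\<lambda>_. borel"] by simp
  have "distributed (gauss_noise n \<sigma>) lborel (\<lambda>x. \<Sum>i\<in>I. a i * x i)
           (normal_density (\<Sum>i\<in>I. 0) (sqrt (\<Sum>i\<in>I. (\<bar>a i\<bar> * \<sigma>)\<^sup>2)))"
  proof (rule sum_indep_normal[OF fin I(2) ind2])
    fix i assume i: "i \<in> I"
    then show "0 < \<bar>a i\<bar> * \<sigma>" using I sig by auto
    have "distributed (gauss_noise n \<sigma>) lborel (\<lambda>x. 0 + a i * x i) (normal_density (0 + a i * 0) (\<bar>a i\<bar> * \<sigma>))"
      by (rule normal_density_affine[OF gauss_distributed[OF _ sig] sig]) (use i I in auto)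
    then show "distributed (gauss_noise n \<sigma>) lborel (\<lambda>x. a i * x i) (normal_density 0 (\<bar>a i\<bar> * \<sigma>))"
      by simp
  qed
  then show ?thesis by simp
qed

lemma dot_tail:
  assumes sig: "\<sigma> > 0" and t: "t > 0"
  shows "measure (gauss_noise n \<sigma>) {e \<in> space (gauss_noise n \<sigma>). t < \<bar>dotv n a e\<bar>}
     \<le> 2 * \<sigma> * sqrt (dotv n a a) / (t * sqrt (2 * pi)) * exp (- t\<^sup>2 / (2 * \<sigma>\<^sup>2 * dotv n a a))"
proof -
  interpret prob_space "gauss_noise n \<sigma>" by (rule gauss_prob[OF sig])
  define I where "I = {i. i < n \<and> a i \<noteq> 0}"
  have fin: "finite I" unfolding I_def by auto
  have dotI: "dotv n a e = (\<Sum>i\<in>I. a i * e i)" for e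
    unfolding dotv_def I_def by (rule sum.mono_neutral_right) auto
  have AI: "dotv n a a = (\<Sum>i\<in>I. (a i)\<^sup>2)" unfolding dotI by (simp add: power2_eq_square)
  show ?thesis
  proof (cases "I = {}")
    case True
    then show ?thesis using dotI AI t by simp
  next
    case False
    have Apos: "dotv n a a > 0" unfolding AI using False fin
      by (intro sum_pos) (auto simp: I_def)
    define S where "S = sqrt (\<Sum>i\<in>I. (\<bar>a i\<bar> * \<sigma>)\<^sup>2)"
    have "(\<Sum>i\<in>I. (\<bar>a i\<bar> * \<sigma>)\<^sup>2) = \<sigma>\<^sup>2 * (\<Sum>i\<in>I. (a i)\<^sup>2)"
      by (simp add: sum_distrib_left power_mult_distrib mult.commute)
    then have S: "S = \<sigma> * sqrt (dotv n a a)" unfolding S_def AI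
      using sig by (simp add: real_sqrt_mult)
    have Spos: "S > 0" using S sig Apos by simp
    have D: "distributed (gauss_noise n \<sigma>) lborel (\<lambda>x. \<Sum>i\<in>I. a i * x i) (normal_density 0 S)"
      unfolding S_def by (rule gauss_lin[OF sig I_def False])
    have set: "{e \<in> space (gauss_noise n \<sigma>). t < \<bar>dotv n a e\<bar>}
        = (\<lambda>x. \<Sum>i\<in>I. a i * x i) -` {y. t < \<bar>y\<bar>} \<inter> space (gauss_noise n \<sigma>)"
      unfolding dotI by auto
    have "emeasure (gauss_noise n \<sigma>) {e \<in> space (gauss_noise n \<sigma>). t < \<bar>dotv n a e\<bar>}
        = (\<integral>\<^sup>+y. ennreal (normal_density 0 S y) * indicator {y. t < \<bar>y\<bar>} y \<partial>lborel)"
      unfolding set by (rule distributed_emeasure[OF D]) auto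
    also have "\<dots> \<le> ennreal (2 * (S\<^sup>2 * normal_density 0 S t / t))"
      by (rule tail_int[OF Spos t])
    finally have le: "measure (gauss_noise n \<sigma>) {e \<in> space (gauss_noise n \<sigma>). t < \<bar>dotv n a e\<bar>}
        \<le> 2 * (S\<^sup>2 * normal_density 0 S t / t)"
      using Spos t by (simp add: emeasure_eq_measure ennreal_le_iff)
    have "2 * (S\<^sup>2 * normal_density 0 S t / t) = 2 * S / (t * sqrt (2 * pi)) * exp (- t\<^sup>2 / (2 * S\<^sup>2))"
      using Spos t unfolding normal_density_def
      by (simp add: real_sqrt_mult field_simps power2_eq_square)
    also have "\<dots> = 2 * \<sigma> * sqrt (dotv n a a) / (t * sqrt (2 * pi)) * exp (- t\<^sup>2 / (2 * \<sigma>\<^sup>2 * dotv n a a))"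
      using Apos unfolding S by (simp add: power_mult_distrib mult.assoc)
    finally show ?thesis using le by simp
  qed
qed



lemma dotv_self_nonneg: "dotv n f f \<ge> 0"
  unfolding dotv_def by (intro sum_nonneg) auto

lemma dotv_comm: "dotv n f g = dotv n g f"
  unfolding dotv_def by (simp add: mult.commute)

lemma dotv_zero: assumes "dotv n f f = 0" shows "dotv n f g = 0"
proof -
  have "\<forall>i\<in>{..<n}. f i * f i = 0"
    using assms unfolding dotv_def by (subst sum_nonneg_eq_0_iff[symmetric]) auto
  then show ?thesis unfolding dotv_def by auto
qed

lemma cauchy_dotv: "\<bar>dotv n a d\<bar> \<le> sqrt (dotv n a a) * sqrt (dotv n d d)"
proof -
  have "\<bar>dotv n a d\<bar> \<le> (\<Sum>i<n. \<bar>a i\<bar> * \<bar>d i\<bar>)"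
    unfolding dotv_def by (rule order_trans[OF sum_abs]) (simp add: abs_mult)
  also have "\<dots> \<le> L2_set a {..<n} * L2_set d {..<n}" by (rule L2_set_mult_ineq)
  also have "\<dots> = sqrt (dotv n a a) * sqrt (dotv n d d)"
    unfolding L2_set_def dotv_def by (simp add: power2_eq_square)
  finally show ?thesis .
qed

lemma fcol_norm:
  "dotv n (col (factor_mat n q W u) j) (col (factor_mat n q W u) j) \<in> {0, real n}"
proof -
  define w where "w = mat_vec q W (u j)"
  define N where "N = normv n w"
  have N2: "N\<^sup>2 = dotv n w w" unfolding N_def normv_def using dotv_self_nonneg by simp
  have "dotv n (col (factor_mat n q W u) j) (col (factor_mat n q W u) j)
      = (\<Sum>i<n. real n * (w i * w i) / N\<^sup>2)"
    unfolding dotv_def col_def factor_mat_def w_def[symmetric] N_def[symmetric]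
    by (intro sum.cong refl) (simp add: power2_eq_square)
  also have "\<dots> = real n * dotv n w w / N\<^sup>2"
    unfolding dotv_def by (simp add: sum_divide_distrib[symmetric] sum_distrib_left)
  finally show ?thesis using N2 by (cases "N = 0") auto
qed

lemma diff_bound:
  assumes f: "dotv n f f \<in> {0, real n}" and g: "dotv n g g \<in> {0, real n}"
  shows "dotv n (\<lambda>i. f i - g i) (\<lambda>i. f i - g i) \<le> 2 * real n * (1 - vcos n g f)"
proof -
  have exp: "dotv n (\<lambda>i. f i - g i) (\<lambda>i. f i - g i) = dotv n f f + dotv n g g - 2 * dotv n g f"
    unfolding dotv_def by (simp add: algebra_simps sum.distrib sum_subtractf sum_distrib_left power2_eq_square)
  show ?thesis
  proof (cases "dotv n f f = 0 \<or> dotv n g g = 0")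
    case True
    then have "dotv n g f = 0" using dotv_zero dotv_comm by metis
    then show ?thesis unfolding exp vcos_def using f g by auto
  next
    case False
    then have ff: "dotv n f f = real n" and gg: "dotv n g g = real n" using f g by auto
    have n: "real n > 0" using ff False by auto
    have "vcos n g f = dotv n g f / real n" unfolding vcos_def normv_def ff gg by simp
    then show ?thesis unfolding exp ff gg using n by (simp add: field_simps)
  qed
qed



lemma bias_bound:
  fixes d :: "nat \<Rightarrow> nat \<Rightarrow> real"
  assumes T: "T > 0" and c2: "c2 > 0" and ln: "L \<ge> 0"
    and gam: "\<forall>j<K. \<bar>g j\<bar> \<le> T"
    and dd: "\<forall>j<K. dotv n (d j) (d j) \<le> c2\<^sup>2 * L / (4 * real K ^ 2 * T\<^sup>2)"
    and aa: "dotv n a a \<le> real n"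
  shows "\<bar>dotv n a (\<lambda>i. \<Sum>j<K. d j i * g j)\<bar> \<le> c2 / 2 * sqrt (real n * L)"
proof (cases "K = 0")
  case True
  then show ?thesis using c2 ln by (simp add: dotv_def)
next
  case False
  then have Kp: "real K > 0" by simp
  have eq: "dotv n a (\<lambda>i. \<Sum>j<K. d j i * g j) = (\<Sum>j<K. g j * dotv n a (d j))"
    unfolding dotv_def by (simp add: sum_distrib_left sum_distrib_right mult_ac sum.swap[of _ "{..<n}"])
  have sq: "sqrt (dotv n (d j) (d j)) \<le> c2 * sqrt L / (2 * real K * T)" if j: "j < K" for j
  proof -
    have "sqrt (dotv n (d j) (d j)) \<le> sqrt (c2\<^sup>2 * L / (4 * real K ^ 2 * T\<^sup>2))"
      using dd j by simp
    also have "\<dots> = c2 * sqrt L / (2 * real K * T)"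
      using c2 T Kp by (simp add: real_sqrt_mult real_sqrt_divide power_mult_distrib[symmetric])
    finally show ?thesis .
  qed
  have "\<bar>\<Sum>j<K. g j * dotv n a (d j)\<bar> \<le> (\<Sum>j<K. \<bar>g j\<bar> * \<bar>dotv n a (d j)\<bar>)"
    by (rule order_trans[OF sum_abs]) (simp add: abs_mult)
  also have "\<dots> \<le> (\<Sum>j<K. T * (sqrt (real n) * (c2 * sqrt L / (2 * real K * T))))"
  proof (rule sum_mono)
    fix j assume "j \<in> {..<K}"
    then have j: "j < K" by simp
    have "\<bar>dotv n a (d j)\<bar> \<le> sqrt (dotv n a a) * sqrt (dotv n (d j) (d j))" by (rule cauchy_dotv)
    also have "\<dots> \<le> sqrt (real n) * (c2 * sqrt L / (2 * real K * T))"
      by (intro mult_mono sq[OF j]) (use aa dotv_self_nonneg in auto)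
    finally show "\<bar>g j\<bar> * \<bar>dotv n a (d j)\<bar> \<le> T * (sqrt (real n) * (c2 * sqrt L / (2 * real K * T)))"
      using gam j by (intro mult_mono) auto
  qed
  also have "\<dots> = c2 / 2 * sqrt (real n * L)"
    using Kp T by (simp add: real_sqrt_mult)
  finally show ?thesis unfolding eq .
qed



lemma dotv_meas[measurable]: "(\<lambda>e. dotv n a e) \<in> borel_measurable (gauss_noise n \<sigma>)"
  unfolding dotv_def gauss_noise_def by measurable

lemma dotv_add: "dotv n a (\<lambda>i. b i + e i) = dotv n a b + dotv n a e"
  unfolding dotv_def by (simp add: algebra_simps sum.distrib)

lemma index_bound:
  assumes sig: "\<sigma> > 0" and c2: "c2 > 0" and n: "n > 0" and L: "L > 0" and Lb: "0 \<le> Lb" "Lb \<le> L"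
    and A: "dotv n a a \<in> {0, real n}"
    and bias: "\<bar>dotv n a b\<bar> \<le> c2 / 2 * sqrt (real n * Lb)"
  shows "measure (gauss_noise n \<sigma>) {e \<in> space (gauss_noise n \<sigma>). c2 * sqrt (L / real n) < \<bar>dotv n a (\<lambda>i. b i + e i) / real n\<bar>}
     \<le> 2 * sqrt 2 * \<sigma> / (c2 * sqrt (pi * L)) * exp (- c2\<^sup>2 * L / (8 * \<sigma>\<^sup>2))"
proof -
  interpret prob_space "gauss_noise n \<sigma>" by (rule gauss_prob[OF sig])
  define t where "t = c2 / 2 * sqrt (real n * L)"
  have t: "t > 0" unfolding t_def using c2 n L by simp
  have nsq: "real n * sqrt (L / real n) = sqrt (real n * L)"
  proof -
    have "real n * L = (real n)\<^sup>2 * (L / real n)" using n by (simp add: power2_eq_square)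
    then have "sqrt (real n * L) = sqrt ((real n)\<^sup>2) * sqrt (L / real n)"
      by (metis real_sqrt_mult)
    then show ?thesis by simp
  qed
  have bias': "\<bar>dotv n a b\<bar> \<le> t"
  proof -
    have "sqrt (real n * Lb) \<le> sqrt (real n * L)" using Lb by (intro real_sqrt_le_mono mult_left_mono) auto
    then have "c2 / 2 * sqrt (real n * Lb) \<le> t" unfolding t_def using c2 by (intro mult_left_mono) auto
    then show ?thesis using bias by linarith
  qed
  have sub: "{e \<in> space (gauss_noise n \<sigma>). c2 * sqrt (L / real n) < \<bar>dotv n a (\<lambda>i. b i + e i) / real n\<bar>}
      \<subseteq> {e \<in> space (gauss_noise n \<sigma>). t < \<bar>dotv n a e\<bar>}"
  proof safe
    fix e assume "c2 * sqrt (L / real n) < \<bar>dotv n a (\<lambda>i. b i + e i) / real n\<bar>"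
    then have "real n * (c2 * sqrt (L / real n)) < \<bar>dotv n a (\<lambda>i. b i + e i)\<bar>"
      using n by (simp add: pos_less_divide_eq mult.commute)
    then have "2 * t < \<bar>dotv n a b + dotv n a e\<bar>"
      unfolding dotv_add t_def using nsq by (simp add: mult.left_commute)
    then show "t < \<bar>dotv n a e\<bar>" using bias' by linarith
  qed
  have "measure (gauss_noise n \<sigma>) {e \<in> space (gauss_noise n \<sigma>). c2 * sqrt (L / real n) < \<bar>dotv n a (\<lambda>i. b i + e i) / real n\<bar>}
      \<le> measure (gauss_noise n \<sigma>) {e \<in> space (gauss_noise n \<sigma>). t < \<bar>dotv n a e\<bar>}"
    by (rule finite_measure_mono[OF sub]) measurable
  also have "\<dots> \<le> 2 * \<sigma> * sqrt (dotv n a a) / (t * sqrt (2 * pi)) * exp (- t\<^sup>2 / (2 * \<sigma>\<^sup>2 * dotv n a a))"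
    by (rule dot_tail[OF sig t])
  also have "\<dots> \<le> 2 * sqrt 2 * \<sigma> / (c2 * sqrt (pi * L)) * exp (- c2\<^sup>2 * L / (8 * \<sigma>\<^sup>2))"
  proof (cases "dotv n a a = 0")
    case True
    then show ?thesis using sig c2 L by simp
  next
    case False
    then have AA: "dotv n a a = real n" using A by auto
    have tt: "t\<^sup>2 = c2\<^sup>2 / 4 * (real n * L)" unfolding t_def using n L
      by (simp add: power_mult_distrib power_divide)
    have e1: "- t\<^sup>2 / (2 * \<sigma>\<^sup>2 * real n) = - c2\<^sup>2 * L / (8 * \<sigma>\<^sup>2)"
      unfolding tt
    proof -
      have "- (c2\<^sup>2 / 4 * (real n * L)) / (2 * \<sigma>\<^sup>2 * real n) = - (c2\<^sup>2 * L / (8 * \<sigma>\<^sup>2)) * (real n / real n)"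
        by (simp add: mult_ac)
      then show "- (c2\<^sup>2 / 4 * (real n * L)) / (2 * \<sigma>\<^sup>2 * real n) = - c2\<^sup>2 * L / (8 * \<sigma>\<^sup>2)"
        using n by simp
    qed
    have e2: "2 * \<sigma> * sqrt (real n) / (t * sqrt (2 * pi)) = 2 * sqrt 2 * \<sigma> / (c2 * sqrt (pi * L))"
    proof -
      have s2: "sqrt 2 * sqrt 2 = (2::real)" by simp
      have tt2: "t * sqrt (2 * pi) = (c2 / 2 * sqrt 2) * sqrt (real n) * sqrt (pi * L)"
        unfolding t_def by (simp add: real_sqrt_mult mult_ac)
      have h: "2 / (c2 / 2 * sqrt 2) = 2 * sqrt 2 / c2"
        using c2 s2 by (simp add: divide_simps)
      have "2 * \<sigma> * sqrt (real n) / ((c2 / 2 * sqrt 2) * sqrt (real n) * sqrt (pi * L))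
          = 2 * \<sigma> / ((c2 / 2 * sqrt 2) * sqrt (pi * L))" using n by simp
      also have "\<dots> = (2 / (c2 / 2 * sqrt 2)) * \<sigma> / sqrt (pi * L)" by simp
      also have "\<dots> = 2 * sqrt 2 * \<sigma> / (c2 * sqrt (pi * L))" unfolding h by simp
      finally show ?thesis unfolding tt2 .
    qed
    show ?thesis unfolding AA e1 e2 by simp
  qed
  finally show ?thesis .
qed



lemma limit_part:
  assumes sig: "\<sigma> > 0" and c2: "c2 > 2 * sqrt 2 * \<sigma>"
    and pp: "\<forall>m. pp m \<ge> m \<and> ss m \<le> m"
  shows "((\<lambda>m. lemma2_bound \<sigma> c2 m (pp m) (ss m)) \<longlongrightarrow> 1) sequentially"
proof -
  define a where "a = c2\<^sup>2 / (8 * \<sigma>\<^sup>2)"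
  have c2p: "c2 > 0" using c2 sig by (smt (verit) mult_pos_pos real_sqrt_gt_0_iff)
  have "(2 * sqrt 2 * \<sigma>)\<^sup>2 < c2\<^sup>2" using c2 sig
    by (intro power_strict_mono) auto
  then have "8 * \<sigma>\<^sup>2 < c2\<^sup>2" by (simp add: power_mult_distrib)
  then have a1: "a > 1" unfolding a_def using sig by simp
  define C where "C = 4 * sqrt 2 * \<sigma> / (c2 * sqrt (pi * ln 3))"
  have ln3: "ln (3::real) > 0" by simp
  have Cnn: "C \<ge> 0" unfolding C_def using sig c2p ln3 by simp
  define t1 where "t1 = (\<lambda>m. 4 * sqrt 2 * \<sigma> / (c2 * sqrt (pi * ln (real (pp m)))) * real (pp m) powr (1 - c2\<^sup>2 / (8 * \<sigma>\<^sup>2)))"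
  define t2 where "t2 = (\<lambda>m. 2 * sqrt 2 * \<sigma> * real (ss m) / (c2 * sqrt (pi * ln (real m))) * real m powr (- c2\<^sup>2 / (8 * \<sigma>\<^sup>2)))"
  have lim0: "((\<lambda>m. C * real m powr (1 - a)) \<longlongrightarrow> C * 0) sequentially"
    by (intro tendsto_mult tendsto_const tendsto_neg_powr filterlim_real_sequentially) (use a1 in auto)
  have ev: "eventually (\<lambda>m. 0 \<le> t1 m \<and> t1 m \<le> C * real m powr (1 - a) \<and> 0 \<le> t2 m \<and> t2 m \<le> C * real m powr (1 - a)) sequentially"
    using eventually_ge_at_top[of 3]
  proof eventually_elim
    case (elim m)
    have m3: "real m \<ge> 3" using elim by simp
    have p3: "real (pp m) \<ge> real m" using pp by simp
    have lnm: "ln (real m) \<ge> ln 3" using m3 by simp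
    have lnp: "ln (real (pp m)) \<ge> ln 3" using m3 p3 by simp
    have plp: "0 < ln (real (pp m))" using lnp ln3 by linarith
    have f1: "4 * sqrt 2 * \<sigma> / (c2 * sqrt (pi * ln (real (pp m)))) \<le> C"
    proof -
      have "ln (real (pp m)) > 0" using lnp ln3 by linarith
      then have pl: "0 < pi * ln (real (pp m))" by simp
      show ?thesis unfolding C_def using sig c2p ln3 lnp pl
        by (intro divide_left_mono mult_left_mono real_sqrt_le_mono mult_pos_pos) auto
    qed
    have f2: "real (pp m) powr (1 - a) \<le> real m powr (1 - a)"
      by (rule powr_mono2') (use a1 m3 p3 in auto)
    have t1: "t1 m \<le> C * real m powr (1 - a)"
      unfolding t1_def a_def[symmetric] using f1 f2 Cnn by (intro mult_mono) auto
    have t1n: "0 \<le> t1 m" unfolding t1_def using sig c2p plp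
      by (intro mult_nonneg_nonneg divide_nonneg_nonneg) auto
    have g1: "2 * sqrt 2 * \<sigma> / (c2 * sqrt (pi * ln (real m))) \<le> C / 2"
    proof -
      have lp: "ln (real m) > 0" using lnm ln3 by linarith
      have "2 * sqrt 2 * \<sigma> / (c2 * sqrt (pi * ln (real m))) \<le> 2 * sqrt 2 * \<sigma> / (c2 * sqrt (pi * ln 3))"
        using sig c2p ln3 lnm lp mult_pos_pos[OF pi_gt_zero lp]
        by (intro divide_left_mono mult_left_mono real_sqrt_le_mono mult_pos_pos) auto
      then show ?thesis unfolding C_def by (simp add: mult_ac)
    qed
    have "t2 m = 2 * sqrt 2 * \<sigma> / (c2 * sqrt (pi * ln (real m))) * (real (ss m) * real m powr (- a))"
      unfolding t2_def a_def by simp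
    also have "\<dots> \<le> C / 2 * (real m * real m powr (- a))"
      using g1 pp Cnn by (intro mult_mono) auto
    also have "real m * real m powr (- a) = real m powr (1 - a)"
      using m3 by (simp add: powr_diff powr_minus divide_inverse)
    finally have "t2 m \<le> C / 2 * real m powr (1 - a)" .
    moreover have "0 \<le> C * real m powr (1 - a)" using Cnn by simp
    ultimately have t2: "t2 m \<le> C * real m powr (1 - a)" by linarith
    have "0 < ln (real m)" using lnm ln3 by linarith
    then have "0 \<le> pi * ln (real m)" by simp
    then have t2n: "0 \<le> t2 m" unfolding t2_def using sig c2p
      by (intro mult_nonneg_nonneg divide_nonneg_nonneg) auto
    show ?case using t1 t1n t2 t2n by simp
  qed
  have l1: "(t1 \<longlongrightarrow> 0) sequentially"
    by (rule tendsto_sandwich[of "\<lambda>_. 0" _ _ "\<lambda>m. C * real m powr (1 - a)"])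
       (use ev lim0 in \<open>auto elim: eventually_mono\<close>)
  have l2: "(t2 \<longlongrightarrow> 0) sequentially"
    by (rule tendsto_sandwich[of "\<lambda>_. 0" _ _ "\<lambda>m. C * real m powr (1 - a)"])
       (use ev lim0 in \<open>auto elim: eventually_mono\<close>)
  have "((\<lambda>m. 1 - t1 m - t2 m) \<longlongrightarrow> 1 - 0 - 0) sequentially"
    by (intro tendsto_diff tendsto_const l1 l2)
  then show ?thesis unfolding lemma2_bound_def t1_def t2_def by simp
qed



lemma aux1: "(n::real) > 0 \<Longrightarrow> 2 * n * (x / (8 * y * n)) = x / (4 * y)"
  by (cases "y = 0") (simp_all add: field_simps)

theorem lemma2:
  fixes n p q K :: nat
    and X :: "nat \<Rightarrow> nat \<Rightarrow> real"   \<comment> \<open>n x p design, conditioned on\<close>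
    and W :: "nat \<Rightarrow> nat \<Rightarrow> real"   \<comment> \<open>n x q covariate matrix, conditioned on\<close>
    and SigmaW :: "nat \<Rightarrow> nat \<Rightarrow> real" \<comment> \<open>q x q covariance of the rows of W\<close>
    and u uhat :: "nat \<Rightarrow> nat \<Rightarrow> real"
    and beta0 gamma0 :: "nat \<Rightarrow> real"
    and \<sigma> T c2 :: real
  defines "F \<equiv> factor_mat n q W u"
    and "Fhat \<equiv> factor_mat n q W uhat"
    and "s \<equiv> card (supp p beta0) + card (supp K gamma0)"
    and "epst \<equiv> (\<lambda>e :: nat \<Rightarrow> real. \<lambda>i. (\<Sum>j<K. (factor_mat n q W u i j - factor_mat n q W uhat i j) * gamma0 j) + e i)"
  assumes n2: "n \<ge> 2" and pn: "p \<ge> n" and pK: "p \<ge> K"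
    and sig: "\<sigma> > 0" and Tpos: "T > 0" and c2: "c2 > 2 * sqrt 2 * \<sigma>"
    and gam: "\<forall>j<K. \<bar>gamma0 j\<bar> \<le> T"
    and Ssym: "\<forall>a<q. \<forall>b<q. SigmaW a b = SigmaW b a"
    and u_top: "top_eigvecs q SigmaW K u"
    and uhat_top: "top_eigvecs q (sample_cov n W) K uhat"
    and Xcols: "\<forall>k<p. normv n (col X k) = sqrt (real n)"
    and angle: "\<forall>j<K. vcos n (col Fhat j) (col F j)
                     \<ge> 1 - c2\<^sup>2 * ln (real n) / (8 * real K ^ 2 * T\<^sup>2 * real n)"
  shows "measure (gauss_noise n \<sigma>)
           ({e \<in> space (gauss_noise n \<sigma>).
               (\<forall>k<p. \<bar>dotv n (col X k) (epst e) / real n\<bar> \<le> c2 * sqrt (ln (real p) / real n)) \<and>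
               (\<forall>j<K. \<bar>dotv n (col Fhat j) (epst e) / real n\<bar> \<le> c2 * sqrt (ln (real p) / real n))}
            \<inter>
            {e \<in> space (gauss_noise n \<sigma>).
               (\<forall>k\<in>supp p beta0. \<bar>dotv n (col X k) (epst e) / real n\<bar> \<le> c2 * sqrt (ln (real n) / real n)) \<and>
               (\<forall>j\<in>supp K gamma0. \<bar>dotv n (col Fhat j) (epst e) / real n\<bar> \<le> c2 * sqrt (ln (real n) / real n))})
         \<ge> lemma2_bound \<sigma> c2 n p s
       \<and> (\<forall>pp ss :: nat \<Rightarrow> nat. (\<forall>m. pp m \<ge> m \<and> ss m \<le> m) \<longrightarrow>
            ((\<lambda>m. lemma2_bound \<sigma> c2 m (pp m) (ss m)) \<longlongrightarrow> 1) sequentially)"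
proof -
  let ?M = "gauss_noise n \<sigma>"
  interpret P: prob_space "gauss_noise n \<sigma>" by (rule gauss_prob[OF sig])
  define b where "b = (\<lambda>i. \<Sum>j<K. (factor_mat n q W u i j - factor_mat n q W uhat i j) * gamma0 j)"
  have epst: "epst e = (\<lambda>i. b i + e i)" for e unfolding epst_def b_def by simp
  have c2p: "c2 > 0" using c2 sig by (smt (verit) mult_pos_pos real_sqrt_gt_0_iff)
  have np: "n > 0" using n2 by simp
  have lnn: "ln (real n) > 0" using n2 by simp
  have lnnp: "ln (real n) \<le> ln (real p)" using pn n2 by simp
  have lnp: "ln (real p) > 0" using lnn lnnp by linarith
  have Xn: "dotv n (col X k) (col X k) = real n" if "k < p" for k
    using Xcols that unfolding normv_def by (simp add: dotv_self_nonneg)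
  have Fhn: "dotv n (col Fhat j) (col Fhat j) \<in> {0, real n}" for j
    unfolding Fhat_def by (rule fcol_norm)
  have Fn: "dotv n (col F j) (col F j) \<in> {0, real n}" for j
    unfolding F_def by (rule fcol_norm)
  have dd: "\<forall>j<K. dotv n ((\<lambda>j i. F i j - Fhat i j) j) ((\<lambda>j i. F i j - Fhat i j) j)
              \<le> c2\<^sup>2 * ln (real n) / (4 * real K ^ 2 * T\<^sup>2)"
  proof (intro allI impI)
    fix j assume j: "j < K"
    have "dotv n (\<lambda>i. col F j i - col Fhat j i) (\<lambda>i. col F j i - col Fhat j i)
        \<le> 2 * real n * (1 - vcos n (col Fhat j) (col F j))"
      by (rule diff_bound[OF Fn Fhn])
    also have "\<dots> \<le> 2 * real n * (c2\<^sup>2 * ln (real n) / (8 * real K ^ 2 * T\<^sup>2 * real n))"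
      using angle j by (intro mult_left_mono) auto
    also have "\<dots> = c2\<^sup>2 * ln (real n) / (4 * real K ^ 2 * T\<^sup>2)"
      using aux1[of "real n" "c2\<^sup>2 * ln (real n)" "real K ^ 2 * T\<^sup>2"] np by (simp add: mult.assoc)
    finally show "dotv n ((\<lambda>j i. F i j - Fhat i j) j) ((\<lambda>j i. F i j - Fhat i j) j)
              \<le> c2\<^sup>2 * ln (real n) / (4 * real K ^ 2 * T\<^sup>2)" by (simp add: col_def)
  qed
  have bias: "\<bar>dotv n a b\<bar> \<le> c2 / 2 * sqrt (real n * ln (real n))" if "dotv n a a \<le> real n" for a
  proof -
    have "b = (\<lambda>i. \<Sum>j<K. (\<lambda>j i. F i j - Fhat i j) j i * gamma0 j)"
      unfolding b_def F_def Fhat_def by simp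
    then show ?thesis
      using bias_bound[OF Tpos c2p less_imp_le[OF lnn] gam dd that] by simp
  qed
  define B where "B = (\<lambda>L. 2 * sqrt 2 * \<sigma> / (c2 * sqrt (pi * L)) * exp (- c2\<^sup>2 * L / (8 * \<sigma>\<^sup>2)))"
  have Bnn: "B L \<ge> 0" if "L > 0" for L unfolding B_def using sig c2p that by simp
  define BX where "BX = (\<lambda>L k. {e \<in> space ?M. c2 * sqrt (L / real n) < \<bar>dotv n (col X k) (\<lambda>i. b i + e i) / real n\<bar>})"
  define BF where "BF = (\<lambda>L j. {e \<in> space ?M. c2 * sqrt (L / real n) < \<bar>dotv n (col Fhat j) (\<lambda>i. b i + e i) / real n\<bar>})"
  have BXm: "BX L k \<in> sets ?M" for L k unfolding BX_def dotv_add by measurable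
  have BFm: "BF L k \<in> sets ?M" for L k unfolding BF_def dotv_add by measurable
  have BXb: "measure ?M (BX L k) \<le> B L" if "k < p" "L > 0" "ln (real n) \<le> L" for L k
    unfolding BX_def B_def
    by (rule index_bound[OF sig c2p np that(2) less_imp_le[OF lnn] that(3)])
       (use Xn[OF that(1)] bias[of "col X k"] that(1) in auto)
  have BFb: "measure ?M (BF L j) \<le> B L" if "L > 0" "ln (real n) \<le> L" for L j
  proof -
    have "dotv n (col Fhat j) (col Fhat j) \<le> real n" using Fhn[of j] by auto
    then show ?thesis unfolding BF_def B_def
      by (intro index_bound[OF sig c2p np that(1) less_imp_le[OF lnn] that(2) Fhn bias])
  qed
  define U1 where "U1 = (\<Union>k\<in>{..<p}. BX (ln (real p)) k)"
  define U2 where "U2 = (\<Union>j\<in>{..<K}. BF (ln (real p)) j)"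
  define U3 where "U3 = (\<Union>k\<in>supp p beta0. BX (ln (real n)) k)"
  define U4 where "U4 = (\<Union>j\<in>supp K gamma0. BF (ln (real n)) j)"
  have finsupp: "finite (supp p beta0)" "finite (supp K gamma0)" unfolding supp_def by auto
  have U1m: "U1 \<in> sets ?M" unfolding U1_def using BXm by auto
  have U2m: "U2 \<in> sets ?M" unfolding U2_def using BFm by auto
  have U3m: "U3 \<in> sets ?M" unfolding U3_def using BXm finsupp by auto
  have U4m: "U4 \<in> sets ?M" unfolding U4_def using BFm finsupp by auto
  have U1b: "measure ?M U1 \<le> real p * B (ln (real p))"
  proof -
    have "measure ?M U1 \<le> (\<Sum>k<p. measure ?M (BX (ln (real p)) k))"
      unfolding U1_def by (rule P.finite_measure_subadditive_finite) (use BXm in auto)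
    also have "\<dots> \<le> (\<Sum>k<p. B (ln (real p)))"
      by (intro sum_mono BXb) (use lnp lnnp in auto)
    finally show ?thesis by simp
  qed
  have U2b: "measure ?M U2 \<le> real K * B (ln (real p))"
  proof -
    have "measure ?M U2 \<le> (\<Sum>k<K. measure ?M (BF (ln (real p)) k))"
      unfolding U2_def by (rule P.finite_measure_subadditive_finite) (use BFm in auto)
    also have "\<dots> \<le> (\<Sum>k<K. B (ln (real p)))"
      by (intro sum_mono BFb) (use lnp lnnp in auto)
    finally show ?thesis by simp
  qed
  have U3b: "measure ?M U3 \<le> real (card (supp p beta0)) * B (ln (real n))"
  proof -
    have "measure ?M U3 \<le> (\<Sum>k\<in>supp p beta0. measure ?M (BX (ln (real n)) k))"
      unfolding U3_def by (rule P.finite_measure_subadditive_finite) (use BXm finsupp in auto)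
    also have "\<dots> \<le> (\<Sum>k\<in>supp p beta0. B (ln (real n)))"
      by (intro sum_mono BXb) (use lnn in \<open>auto simp: supp_def\<close>)
    finally show ?thesis by simp
  qed
  have U4b: "measure ?M U4 \<le> real (card (supp K gamma0)) * B (ln (real n))"
  proof -
    have "measure ?M U4 \<le> (\<Sum>k\<in>supp K gamma0. measure ?M (BF (ln (real n)) k))"
      unfolding U4_def by (rule P.finite_measure_subadditive_finite) (use BFm finsupp in auto)
    also have "\<dots> \<le> (\<Sum>k\<in>supp K gamma0. B (ln (real n)))"
      by (intro sum_mono BFb) (use lnn in \<open>auto simp: supp_def\<close>)
    finally show ?thesis by simp
  qed
  have Ub: "measure ?M (U1 \<union> U2 \<union> U3 \<union> U4) \<le> 2 * real p * B (ln (real p)) + real s * B (ln (real n))"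
  proof -
    have "measure ?M (U1 \<union> U2 \<union> U3 \<union> U4) \<le> measure ?M (U1 \<union> U2 \<union> U3) + measure ?M U4"
      by (rule measure_Un_le) (use U1m U2m U3m U4m in auto)
    also have "measure ?M (U1 \<union> U2 \<union> U3) \<le> measure ?M (U1 \<union> U2) + measure ?M U3"
      by (rule measure_Un_le) (use U1m U2m U3m in auto)
    also have "measure ?M (U1 \<union> U2) \<le> measure ?M U1 + measure ?M U2"
      by (rule measure_Un_le) (use U1m U2m in auto)
    finally have "measure ?M (U1 \<union> U2 \<union> U3 \<union> U4) \<le> real p * B (ln (real p)) + real K * B (ln (real p))
        + real (card (supp p beta0)) * B (ln (real n)) + real (card (supp K gamma0)) * B (ln (real n))"
      using U1b U2b U3b U4b by linarith
    moreover have "real K * B (ln (real p)) \<le> real p * B (ln (real p))"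
      using pK Bnn[OF lnp] by (intro mult_right_mono) auto
    moreover have "real s * B (ln (real n)) = real (card (supp p beta0)) * B (ln (real n)) + real (card (supp K gamma0)) * B (ln (real n))"
      unfolding s_def by (simp add: distrib_right)
    ultimately show ?thesis by linarith
  qed
  have seteq: "{e \<in> space ?M.
               (\<forall>k<p. \<bar>dotv n (col X k) (epst e) / real n\<bar> \<le> c2 * sqrt (ln (real p) / real n)) \<and>
               (\<forall>j<K. \<bar>dotv n (col Fhat j) (epst e) / real n\<bar> \<le> c2 * sqrt (ln (real p) / real n))}
            \<inter>
            {e \<in> space ?M.
               (\<forall>k\<in>supp p beta0. \<bar>dotv n (col X k) (epst e) / real n\<bar> \<le> c2 * sqrt (ln (real n) / real n)) \<and>
               (\<forall>j\<in>supp K gamma0. \<bar>dotv n (col Fhat j) (epst e) / real n\<bar> \<le> c2 * sqrt (ln (real n) / real n))}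
        = space ?M - (U1 \<union> U2 \<union> U3 \<union> U4)"
    unfolding epst U1_def U2_def U3_def U4_def BX_def BF_def by (rule set_eqI) (simp add: not_less; blast)
  have pw1: "2 * real p * B (ln (real p)) = 4 * sqrt 2 * \<sigma> / (c2 * sqrt (pi * ln (real p))) * real p powr (1 - c2\<^sup>2 / (8 * \<sigma>\<^sup>2))"
  proof -
    have "real p powr (1 - c2\<^sup>2 / (8 * \<sigma>\<^sup>2)) = real p * exp (- c2\<^sup>2 * ln (real p) / (8 * \<sigma>\<^sup>2))"
    proof -
      have "real p powr (1 - c2\<^sup>2 / (8 * \<sigma>\<^sup>2)) = real p powr 1 * real p powr (- (c2\<^sup>2 / (8 * \<sigma>\<^sup>2)))"
        by (subst powr_add[symmetric]) simp
      also have "real p powr 1 = real p" by simp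
      also have "real p powr (- (c2\<^sup>2 / (8 * \<sigma>\<^sup>2))) = exp (- c2\<^sup>2 * ln (real p) / (8 * \<sigma>\<^sup>2))"
        using np pn by (simp add: powr_def)
      finally show ?thesis .
    qed
    then show ?thesis unfolding B_def by simp
  qed
  have pw2: "real s * B (ln (real n)) = 2 * sqrt 2 * \<sigma> * real s / (c2 * sqrt (pi * ln (real n))) * real n powr (- c2\<^sup>2 / (8 * \<sigma>\<^sup>2))"
  proof -
    have "real n powr (- c2\<^sup>2 / (8 * \<sigma>\<^sup>2)) = exp (- c2\<^sup>2 * ln (real n) / (8 * \<sigma>\<^sup>2))"
      using np by (simp add: powr_def)
    then show ?thesis unfolding B_def by simp
  qed
  have "measure ?M (space ?M - (U1 \<union> U2 \<union> U3 \<union> U4)) = 1 - measure ?M (U1 \<union> U2 \<union> U3 \<union> U4)"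
    by (rule P.prob_compl) (use U1m U2m U3m U4m in auto)
  then have main: "measure ?M (space ?M - (U1 \<union> U2 \<union> U3 \<union> U4)) \<ge> lemma2_bound \<sigma> c2 n p s"
    using Ub pw1 pw2 unfolding lemma2_bound_def by linarith
  show ?thesis
    using main limit_part[OF sig c2] unfolding seteq by blast
qed


end
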